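(* Let $T\in B(H)$ satisfy $(T-t_N)^{k_N}(T-t_{N-1})^{k_{N-1}}\cdots(T-t_1)^{k_1}=0$, where $t_1,\ldots,t_N\in\mathbb C$ are pairwise distinct and $k_1,\ldots,k_N$ are positive integers. For $0\le m\le N$ let $R_m=\ker\big((T-t_m)^{k_m}\cdots(T-t_1)^{k_1}\big)$ (with $R_0=\{0\}$, so $R_N=H$), and for $1\le m\le N$ let $L_m=R_m\ominus R_{m-1}$. Then for every $m$, the orthogonal projection onto $L_m$ belongs to $C^*(T,1)$, the unital $C^*$-algebra generated by $T$. *)

theory Defs
  imports "HOL-Analysis.Analysis"
begin

class complex_inner = real_normed_vector +
  fixes scaleC :: "complex \<Rightarrow> 'a \<Rightarrow> 'a"
    and cinner :: "'a \<Rightarrow> 'a \<Rightarrow> complex"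
  assumes scaleC_add_right: "scaleC a (x + y) = scaleC a x + scaleC a y"
    and scaleC_add_left: "scaleC (a + b) x = scaleC a x + scaleC b x"
    and scaleC_scaleC: "scaleC a (scaleC b x) = scaleC (a * b) x"
    and scaleC_one: "scaleC 1 x = x"
    and scaleR_scaleC: "scaleR r x = scaleC (complex_of_real r) x"
    and cinner_commute: "cinner x y = cnj (cinner y x)"
    and cinner_add_left: "cinner (x + y) z = cinner x z + cinner y z"
    and cinner_scaleC_left: "cinner (scaleC c x) y = cnj c * cinner x y"
    and cinner_self_norm: "cinner x x = complex_of_real ((norm x)\<^sup>2)"

class chilbert = complex_inner + complete_space

definition bounded_clinear :: "('a::complex_inner \<Rightarrow> 'a) \<Rightarrow> bool" where
  "bounded_clinear f \<longleftrightarrow>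
     (\<forall>x y. f (x + y) = f x + f y) \<and>
     (\<forall>c x. f (scaleC c x) = scaleC c (f x)) \<and>
     (\<exists>K. \<forall>x. norm (f x) \<le> norm x * K)"

definition cadjoint :: "('a::complex_inner \<Rightarrow> 'a) \<Rightarrow> ('a \<Rightarrow> 'a)" where
  "cadjoint A = (SOME B. \<forall>x y. cinner (A x) y = cinner x (B y))"

inductive_set star_poly_alg :: "('a::complex_inner \<Rightarrow> 'a) \<Rightarrow> ('a \<Rightarrow> 'a) set"
  for T :: "'a \<Rightarrow> 'a" where
  gen: "T \<in> star_poly_alg T"
| unit: "(\<lambda>x. x) \<in> star_poly_alg T"
| adj: "A \<in> star_poly_alg T \<Longrightarrow> cadjoint A \<in> star_poly_alg T"
| add: "A \<in> star_poly_alg T \<Longrightarrow> B \<in> star_poly_alg T \<Longrightarrow> (\<lambda>x. A x + B x) \<in> star_poly_alg T"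
| smult: "A \<in> star_poly_alg T \<Longrightarrow> (\<lambda>x. scaleC c (A x)) \<in> star_poly_alg T"
| comp: "A \<in> star_poly_alg T \<Longrightarrow> B \<in> star_poly_alg T \<Longrightarrow> A \<circ> B \<in> star_poly_alg T"

text \<open>C*(T,1): operator-norm closure of the unital *-algebra generated by T.\<close>
definition cstar_gen :: "('a::complex_inner \<Rightarrow> 'a) \<Rightarrow> ('a \<Rightarrow> 'a) set" where
  "cstar_gen T = {A. bounded_clinear A \<and>
     (\<forall>e>0. \<exists>P\<in>star_poly_alg T. onorm (\<lambda>x. A x - P x) < e)}"

definition is_orth_proj :: "('a::complex_inner \<Rightarrow> 'a) \<Rightarrow> 'a set \<Rightarrow> bool" where
  "is_orth_proj P M \<longleftrightarrow> (\<forall>x. P x \<in> M \<and> (\<forall>y\<in>M. cinner y (x - P x) = 0))"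

definition ker :: "('a::complex_inner \<Rightarrow> 'a) \<Rightarrow> 'a set" where
  "ker A = {x. A x = 0}"

definition orth_in :: "'a::complex_inner set \<Rightarrow> 'a set \<Rightarrow> 'a set" where
  "orth_in R S = {x \<in> R. \<forall>y\<in>S. cinner y x = 0}"

fun opprod :: "('a::complex_inner \<Rightarrow> 'a) \<Rightarrow> (nat \<Rightarrow> complex) \<Rightarrow> (nat \<Rightarrow> nat) \<Rightarrow> nat \<Rightarrow> ('a \<Rightarrow> 'a)" where
  "opprod T t k 0 = (\<lambda>x. x)"
| "opprod T t k (Suc m) = ((\<lambda>x. T x - scaleC (t (Suc m)) x) ^^ k (Suc m)) \<circ> opprod T t k m"

end

theory Submission
  imports Defs "HOL-Computational_Algebra.Polynomial"
begin


lemma scaleC_zero_left[simp]: "scaleC 0 x = (0::'a::complex_inner)"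
proof -
  have "scaleC 0 x = scaleC 0 x + scaleC 0 (x::'a)" using scaleC_add_left[of 0 0 x] by simp
  then show ?thesis by simp
qed

lemma scaleC_zero_right[simp]: "scaleC a 0 = (0::'a::complex_inner)"
proof -
  have "scaleC a 0 = scaleC a 0 + scaleC a (0::'a)" using scaleC_add_right[of a 0 0] by simp
  then show ?thesis by simp
qed

lemma scaleC_minus_left: "scaleC (-a) x = - scaleC a (x::'a::complex_inner)"
proof -
  have "scaleC a x + scaleC (-a) x = 0" using scaleC_add_left[of a "-a" x] by simp
  then show ?thesis by (simp add: eq_neg_iff_add_eq_0 add.commute)
qed

lemma scaleC_minus_right: "scaleC a (-x) = - scaleC a (x::'a::complex_inner)"
proof -
  have "scaleC a x + scaleC a (-x) = 0" using scaleC_add_right[of a x "-x"] by simp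
  then show ?thesis by (simp add: eq_neg_iff_add_eq_0 add.commute)
qed

lemma scaleC_diff_left: "scaleC (a - b) x = scaleC a x - scaleC b (x::'a::complex_inner)"
  using scaleC_add_left[of a "-b" x] scaleC_minus_left[of b x] by simp

lemma scaleC_diff_right: "scaleC a (x - y) = scaleC a x - scaleC a (y::'a::complex_inner)"
  using scaleC_add_right[of a x "-y"] scaleC_minus_right[of a y] by simp

lemma scaleC_one'[simp]: "scaleC 1 x = (x::'a::complex_inner)" by (rule scaleC_one)

lemma cinner_add_right: "cinner x (y + z) = cinner x y + cinner x (z::'a::complex_inner)"
  by (metis cinner_add_left cinner_commute complex_cnj_add)

lemma cinner_scaleC_right: "cinner x (scaleC c y) = c * cinner x (y::'a::complex_inner)"
  by (metis cinner_commute cinner_scaleC_left complex_cnj_cnj complex_cnj_mult)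

lemma cinner_zero_left[simp]: "cinner 0 x = (0::complex)"
  using cinner_scaleC_left[of 0 "0::'a::complex_inner" x] by simp

lemma cinner_zero_right[simp]: "cinner x 0 = (0::complex)"
  using cinner_scaleC_right[of x 0 "0::'a::complex_inner"] by simp

lemma cinner_minus_left: "cinner (-x) y = - cinner x (y::'a::complex_inner)"
  using cinner_scaleC_left[of "-1" x y] scaleC_minus_left[of 1 x] by simp

lemma cinner_minus_right: "cinner x (-y) = - cinner x (y::'a::complex_inner)"
  using cinner_scaleC_right[of x "-1" y] scaleC_minus_left[of 1 y] by simp

lemma cinner_diff_left: "cinner (x - y) z = cinner x z - cinner y (z::'a::complex_inner)"
  using cinner_add_left[of x "-y" z] cinner_minus_left[of y z] by simp

lemma cinner_diff_right: "cinner x (y - z) = cinner x y - cinner x (z::'a::complex_inner)"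
  using cinner_add_right[of x y "-z"] cinner_minus_right[of x z] by simp

lemma norm_sq_cinner: "(norm x)^2 = Re (cinner x (x::'a::complex_inner))"
  by (simp add: cinner_self_norm)

lemma cinner_self_eq_zero: "cinner x x = 0 \<longleftrightarrow> x = (0::'a::complex_inner)"
  by (simp add: cinner_self_norm)

lemma norm_add_sq: "(norm (x + y))^2 = (norm x)^2 + 2 * Re (cinner x y) + (norm (y::'a::complex_inner))^2"
proof -
  have "cinner (x+y) (x+y) = cinner x x + cinner x y + cnj (cinner x y) + cinner y y"
    by (simp add: cinner_add_left cinner_add_right) (metis cinner_commute)
  then show ?thesis by (simp add: norm_sq_cinner)
qed

lemma norm_diff_sq: "(norm (x - y))^2 = (norm x)^2 - 2 * Re (cinner x y) + (norm (y::'a::complex_inner))^2"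
  using norm_add_sq[of x "-y"] by (simp add: cinner_minus_right)

lemma norm_scaleC: "norm (scaleC c x) = cmod c * norm (x::'a::complex_inner)"
proof -
  have 1: "(norm (scaleC c x))^2 = Re (cnj c * c * cinner x x)"
    by (metis norm_sq_cinner cinner_scaleC_left cinner_scaleC_right mult.assoc mult.commute)
  have 2: "cnj c * c * cinner x x = complex_of_real ((cmod c)^2 * (norm x)^2)"
    by (metis cinner_self_norm complex_norm_square mult.commute of_real_mult)
  have "(norm (scaleC c x))^2 = (cmod c * norm x)^2" using 1 2 by (simp add: power_mult_distrib)
  then show ?thesis by (simp add: power2_eq_iff_nonneg)
qed

lemma cauchy_schwarz: "cmod (cinner x y) \<le> norm x * norm (y::'a::complex_inner)"
proof (cases "x = 0")
  case True then show ?thesis by simp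
next
  case False
  define c where "c = cinner x y / of_real ((norm x)^2)"
  have nx: "norm x > 0" using False by simp
  have "0 \<le> (norm (y - scaleC c x))^2" by simp
  also have "\<dots> = (norm y)^2 - 2 * Re (cinner y (scaleC c x)) + (cmod c)^2 * (norm x)^2"
    by (simp add: norm_diff_sq norm_scaleC power_mult_distrib)
  also have "cinner y (scaleC c x) = c * cnj (cinner x y)"
    by (simp add: cinner_scaleC_right) (metis cinner_commute)
  also have "Re (c * cnj (cinner x y)) = (cmod (cinner x y))^2 / (norm x)^2"
    unfolding c_def by (simp add: complex_mult_cnj) (metis cmod_power2 power2_eq_square)
  also have "(cmod c)^2 * (norm x)^2 = (cmod (cinner x y))^2 / (norm x)^2"
    unfolding c_def using nx by (simp add: norm_divide power_divide power2_eq_square norm_mult)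
  finally have "(cmod (cinner x y))^2 / (norm x)^2 \<le> (norm y)^2" by simp
  then have "(cmod (cinner x y))^2 \<le> (norm x * norm y)^2" using nx
    by (simp add: divide_le_eq power_mult_distrib mult.commute)
  then show ?thesis by (rule power2_le_imp_le) simp
qed



lemma bclI:
  assumes "\<And>x y. f (x + y) = f x + f y" "\<And>c x. f (scaleC c x) = scaleC c (f x)"
    "\<And>x. norm (f x) \<le> norm x * K"
  shows "bounded_clinear (f::'a::complex_inner \<Rightarrow> 'a)"
  unfolding bounded_clinear_def using assms by blast

lemma bcl_add: "bounded_clinear f \<Longrightarrow> f (x + y) = f x + f y"
  unfolding bounded_clinear_def by blast

lemma bcl_scaleC: "bounded_clinear f \<Longrightarrow> f (scaleC c x) = scaleC c (f x)"
  unfolding bounded_clinear_def by blast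

lemma bcl_bound: "bounded_clinear f \<Longrightarrow> \<exists>K>0. \<forall>x. norm (f x) \<le> norm x * K"
proof -
  assume "bounded_clinear f"
  then obtain K where K: "\<forall>x. norm (f x) \<le> norm x * K" unfolding bounded_clinear_def by blast
  have "\<forall>x. norm (f x) \<le> norm x * max K 1"
    by (metis K max.cobounded1 mult_left_mono norm_ge_zero order_trans)
  then show ?thesis by (intro exI[of _ "max K 1"]) auto
qed

lemma bcl_zero[simp]: "bounded_clinear f \<Longrightarrow> f 0 = 0"
  using bcl_scaleC[of f 0 0] by simp

lemma scaleC_neg1[simp]: "scaleC (-1) x = - (x::'a::complex_inner)"
  using scaleC_minus_left[of 1 x] by simp

lemma bcl_minus: "bounded_clinear f \<Longrightarrow> f (- x) = - f x"
  by (metis bcl_scaleC scaleC_neg1)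

lemma bcl_diff: "bounded_clinear f \<Longrightarrow> f (x - y) = f x - f y"
  using bcl_add[of f x "-y"] bcl_minus[of f y] by simp

lemma bcl_linear: "bounded_clinear f \<Longrightarrow> bounded_linear f"
proof -
  assume f: "bounded_clinear f"
  then obtain K where K: "\<forall>x. norm (f x) \<le> norm x * K" unfolding bounded_clinear_def by blast
  show ?thesis
  proof (rule bounded_linear_intro[where K=K])
    show "f (x + y) = f x + f y" for x y using bcl_add[OF f] .
    show "f (scaleR r x) = scaleR r (f x)" for r x using bcl_scaleC[OF f] by (simp add: scaleR_scaleC)
    show "norm (f x) \<le> norm x * K" for x using K by blast
  qed
qed

lemma bcl_id: "bounded_clinear (\<lambda>x::'a::complex_inner. x)"
  by (rule bclI[where K=1]) auto

lemma bcl_const0: "bounded_clinear (\<lambda>x::'a::complex_inner. 0::'a)"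
  by (rule bclI[where K=1]) auto

lemma bcl_comp: "bounded_clinear f \<Longrightarrow> bounded_clinear g \<Longrightarrow> bounded_clinear (f \<circ> g)"
proof -
  assume f: "bounded_clinear f" and g: "bounded_clinear g"
  obtain K where K: "K>0" "\<forall>x. norm (f x) \<le> norm x * K" using bcl_bound[OF f] by blast
  obtain L where L: "L>0" "\<forall>x. norm (g x) \<le> norm x * L" using bcl_bound[OF g] by blast
  show ?thesis
  proof (rule bclI[where K="L*K"])
    show "(f \<circ> g) (x + y) = (f \<circ> g) x + (f \<circ> g) y" for x y by (simp add: bcl_add[OF f] bcl_add[OF g])
    show "(f \<circ> g) (scaleC c x) = scaleC c ((f \<circ> g) x)" for c x by (simp add: bcl_scaleC[OF f] bcl_scaleC[OF g])
    show "norm ((f \<circ> g) x) \<le> norm x * (L * K)" for x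
    proof -
      have "norm (f (g x)) \<le> norm (g x) * K" using K by blast
      also have "\<dots> \<le> norm x * L * K" using L K by (simp add: mult_right_mono)
      finally show ?thesis by (simp add: mult.assoc)
    qed
  qed
qed

lemma bcl_plus: "bounded_clinear f \<Longrightarrow> bounded_clinear g \<Longrightarrow> bounded_clinear (\<lambda>x. f x + g x)"
proof -
  assume f: "bounded_clinear f" and g: "bounded_clinear g"
  obtain K where K: "K>0" "\<forall>x. norm (f x) \<le> norm x * K" using bcl_bound[OF f] by blast
  obtain L where L: "L>0" "\<forall>x. norm (g x) \<le> norm x * L" using bcl_bound[OF g] by blast
  show ?thesis
  proof (rule bclI[where K="K+L"])
    show "f (x + y) + g (x + y) = (f x + g x) + (f y + g y)" for x y by (simp add: bcl_add[OF f] bcl_add[OF g] algebra_simps)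
    show "f (scaleC c x) + g (scaleC c x) = scaleC c (f x + g x)" for c x by (simp add: bcl_scaleC[OF f] bcl_scaleC[OF g] scaleC_add_right)
    show "norm (f x + g x) \<le> norm x * (K + L)" for x
      using norm_triangle_ineq[of "f x" "g x"] K L by (smt (verit) distrib_left)
  qed
qed

lemma bcl_smult: "bounded_clinear f \<Longrightarrow> bounded_clinear (\<lambda>x. scaleC c (f x))"
proof -
  assume f: "bounded_clinear f"
  obtain K where K: "K>0" "\<forall>x. norm (f x) \<le> norm x * K" using bcl_bound[OF f] by blast
  show ?thesis
  proof (rule bclI[where K="cmod c * K"])
    show "scaleC c (f (x + y)) = scaleC c (f x) + scaleC c (f y)" for x y by (simp add: bcl_add[OF f] scaleC_add_right)
    show "scaleC c (f (scaleC d x)) = scaleC d (scaleC c (f x))" for d x by (simp add: bcl_scaleC[OF f] scaleC_scaleC mult.commute)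
    show "norm (scaleC c (f x)) \<le> norm x * (cmod c * K)" for x
      using K by (simp add: norm_scaleC) (metis mult.left_commute mult_left_mono norm_ge_zero)
  qed
qed

lemma bcl_minus_fun: "bounded_clinear f \<Longrightarrow> bounded_clinear g \<Longrightarrow> bounded_clinear (\<lambda>x. f x - g x)"
proof -
  assume f: "bounded_clinear f" and g: "bounded_clinear g"
  have "bounded_clinear (\<lambda>x. f x + scaleC (-1) (g x))" by (intro bcl_plus f bcl_smult g)
  moreover have "(\<lambda>x. f x + scaleC (-1) (g x)) = (\<lambda>x. f x - g x)"
    by (simp add: scaleC_minus_left)
  ultimately show ?thesis by simp
qed

lemma bcl_funpow: "bounded_clinear f \<Longrightarrow> bounded_clinear (f ^^ n)"
proof (induction n)
  case 0 then show ?case using bcl_id by (simp add: id_def)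
next
  case (Suc n) then show ?case by (metis bcl_comp funpow.simps(2))
qed



lemma quad_nonneg_zero:
  fixes a b :: real
  assumes "b \<ge> 0" "\<forall>s. s * a + s^2 * b \<ge> 0"
  shows "a = 0"
proof (rule ccontr)
  assume a: "a \<noteq> 0"
  define s where "s = - a / (b + 1)"
  have b1: "b + 1 > 0" using assms(1) by simp
  have "a + s * b = a / (b+1)" unfolding s_def using b1 by (simp add: field_simps)
  moreover have "s * a + s^2 * b = s * (a + s * b)" by (simp add: power2_eq_square algebra_simps)
  ultimately have "s * a + s^2 * b = s * (a / (b+1))" by simp
  also have "\<dots> = -(a^2) / ((b+1)^2)" unfolding s_def by (simp add: power2_eq_square)
  also have "\<dots> < 0" using a assms(1) by simp
  finally show False using assms(2) by smt
qed

lemma riesz: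
  fixes g :: "'a::chilbert \<Rightarrow> complex"
  assumes add: "\<And>x y. g (x+y) = g x + g y" and sc: "\<And>c x. g (scaleC c x) = c * g x"
    and bd: "\<And>x. cmod (g x) \<le> K * norm x"
  shows "\<exists>z. \<forall>x. g x = cinner z x"
proof -
  define \<phi> where "\<phi> x = (norm x)^2 - 2 * Re (g x)" for x
  have lb: "\<phi> x \<ge> - (K^2)" for x
  proof -
    have "Re (g x) \<le> K * norm x" using bd[of x] complex_Re_le_cmod[of "g x"] by linarith
    moreover have "0 \<le> (norm x - K)^2" by simp
    ultimately show ?thesis unfolding \<phi>_def by (simp add: power2_eq_square algebra_simps)
  qed
  define I where "I = Inf (range \<phi>)"
  have bdd: "bdd_below (range \<phi>)" using lb by (intro bdd_belowI[of _ "-(K^2)"]) auto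
  have Ilow: "I \<le> \<phi> x" for x unfolding I_def by (rule cInf_lower[OF _ bdd]) simp
  have "\<exists>x. \<phi> x < I + inverse (real (Suc n))" for n
  proof -
    have "Inf (range \<phi>) < I + inverse (real (Suc n))" unfolding I_def by simp
    then show ?thesis by (metis cInf_lessD empty_not_UNIV image_is_empty rangeE)
  qed
  then obtain xs where xs: "\<And>n. \<phi> (xs n) < I + inverse (real (Suc n))" by metis
  have linr: "Re (g (scaleC (1/2) (x+y))) = (Re (g x) + Re (g y)) / 2" for x y
    by (simp add: sc add)
  have par: "(norm (x - y))^2 \<le> 2 * (\<phi> x - I) + 2 * (\<phi> y - I)" for x y
  proof -
    define m where "m = scaleC (1/2) (x+y)"
    have nm: "(norm m)^2 = (norm (x+y))^2 / 4" unfolding m_def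
      by (simp add: norm_scaleC power_mult_distrib power_divide)
    have "(norm (x - y))^2 = 2 * \<phi> x + 2 * \<phi> y - 4 * \<phi> m"
      unfolding \<phi>_def using nm linr[of x y] unfolding m_def[symmetric]
      by (simp add: norm_diff_sq norm_add_sq algebra_simps)
    then show ?thesis using Ilow[of m] by simp
  qed
  have "Cauchy xs"
  proof (rule metric_CauchyI)
    fix e :: real assume e: "e > 0"
    obtain N :: nat where N: "4 / e^2 < real N" using reals_Archimedean2 by blast
    have "dist (xs m) (xs n) < e" if "m \<ge> N" "n \<ge> N" for m n
    proof -
      have im: "inverse (real (Suc m)) \<le> inverse (real (Suc N))" using that by (simp add: field_simps)
      have "inverse (real (Suc n)) \<le> inverse (real (Suc N))" using that by (simp add: field_simps)
      then have "(norm (xs m - xs n))^2 \<le> 4 * inverse (real (Suc N))"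
        using par[of "xs m" "xs n"] xs[of m] xs[of n] im by (smt (verit))
      also have "\<dots> < e^2"
      proof -
        have e2: "0 < e^2" using e by simp
        have h: "4 < real N * e^2" using N e2 by (simp add: field_simps)
        have "e^2 * real (Suc N) = e^2 + real N * e^2" by (simp add: algebra_simps)
        then have "4 < e^2 * real (Suc N)" using h e2 by linarith
        then show ?thesis by (simp add: field_simps)
      qed
      finally have "(norm (xs m - xs n))^2 < e^2" .
      then show ?thesis using e by (simp add: dist_norm power_less_imp_less_base)
    qed
    then show "\<exists>M. \<forall>m\<ge>M. \<forall>n\<ge>M. dist (xs m) (xs n) < e" by blast
  qed
  then obtain z where z: "xs \<longlonglongrightarrow> z" using Cauchy_convergent convergent_def by blast
  have gl: "bounded_linear g"
  proof (rule bounded_linear_intro[where K=K])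
    show "g (x + y) = g x + g y" for x y by (rule add)
    show "g (scaleR r x) = scaleR r (g x)" for r x by (simp add: scaleR_scaleC sc scaleR_conv_of_real)
    show "norm (g x) \<le> norm x * K" for x using bd[of x] by (simp add: mult.commute)
  qed
  have "(\<lambda>n. \<phi> (xs n)) \<longlonglongrightarrow> \<phi> z" unfolding \<phi>_def
    by (intro tendsto_intros bounded_linear.tendsto[OF gl] z)
  moreover have "(\<lambda>n. I + inverse (real (Suc n))) \<longlonglongrightarrow> I + 0"
    by (intro tendsto_intros LIMSEQ_inverse_real_of_nat)
  ultimately have "\<phi> z \<le> I + 0" using xs by (intro LIMSEQ_le) (auto intro: less_imp_le)
  then have phz: "\<phi> z \<le> I" by simp
  have re: "Re (cinner z w) = Re (g w)" for w
  proof -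
    have "\<forall>s::real. s * (2 * (Re (cinner z w) - Re (g w))) + s^2 * (norm w)^2 \<ge> 0"
    proof
      fix s :: real
      have "\<phi> (z + scaleC (of_real s) w) = \<phi> z + s * (2 * (Re (cinner z w) - Re (g w))) + s^2 * (norm w)^2"
        unfolding \<phi>_def by (simp add: norm_add_sq cinner_scaleC_right norm_scaleC add sc power_mult_distrib algebra_simps)
      then show "s * (2 * (Re (cinner z w) - Re (g w))) + s^2 * (norm w)^2 \<ge> 0"
        using Ilow[of "z + scaleC (of_real s) w"] phz by linarith
    qed
    then have "2 * (Re (cinner z w) - Re (g w)) = 0" by (intro quad_nonneg_zero) auto
    then show ?thesis by simp
  qed
  have "g w = cinner z w" for w
  proof (rule complex_eqI)
    show "Re (g w) = Re (cinner z w)" using re[of w] by simp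
    have "Re (cinner z (scaleC \<i> w)) = Re (g (scaleC \<i> w))" by (rule re)
    then show "Im (g w) = Im (cinner z w)" by (simp add: cinner_scaleC_right sc)
  qed
  then show ?thesis by blast
qed



lemma cinner_ext: "(\<And>x. cinner x u = cinner x v) \<Longrightarrow> u = (v::'a::complex_inner)"
proof -
  assume "\<And>x. cinner x u = cinner x v"
  then have "cinner (u - v) (u - v) = 0" by (simp add: cinner_diff_right)
  then show "u = v" by (simp add: cinner_self_eq_zero)
qed

lemma cinner_bound_left: "cmod (cinner x y) \<le> norm x * norm (y::'a::complex_inner)"
  by (rule cauchy_schwarz)

lemma adjoint_exists:
  fixes T :: "'a::chilbert \<Rightarrow> 'a"
  assumes T: "bounded_clinear T"
  shows "\<forall>x y. cinner (T x) y = cinner x (cadjoint T y)"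
proof -
  obtain K where K: "K>0" "\<forall>x. norm (T x) \<le> norm x * K" using bcl_bound[OF T] by blast
  have "\<exists>z. \<forall>x. cinner (T x) y = cinner x z" for y
  proof -
    have "\<exists>z. \<forall>x. cinner y (T x) = cinner z x"
    proof (rule riesz[where K="norm y * K"])
      show "cinner y (T (x + x')) = cinner y (T x) + cinner y (T x')" for x x'
        by (simp add: bcl_add[OF T] cinner_add_right)
      show "cinner y (T (scaleC c x)) = c * cinner y (T x)" for c x
        by (simp add: bcl_scaleC[OF T] cinner_scaleC_right)
      show "cmod (cinner y (T x)) \<le> norm y * K * norm x" for x
      proof -
        have "cmod (cinner y (T x)) \<le> norm y * norm (T x)" by (rule cauchy_schwarz)
        also have "\<dots> \<le> norm y * (norm x * K)" using K by (simp add: mult_left_mono)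
        finally show ?thesis by (simp add: algebra_simps)
      qed
    qed
    then obtain z where "\<forall>x. cinner y (T x) = cinner z x" by blast
    then have "\<forall>x. cinner (T x) y = cinner x z" by (metis cinner_commute)
    then show ?thesis by blast
  qed
  then have "\<exists>B. \<forall>y x. cinner (T x) y = cinner x (B y)" by metis
  then have "\<exists>B. \<forall>x y. cinner (T x) y = cinner x (B y)" by blast
  from someI_ex[OF this] show ?thesis unfolding cadjoint_def .
qed

lemma adjoint_bcl:
  fixes T A :: "'a::complex_inner \<Rightarrow> 'a"
  assumes T: "bounded_clinear T" and A: "\<forall>x y. cinner (T x) y = cinner x (A y)"
  shows "bounded_clinear A"
proof -
  obtain K where K: "K>0" "\<forall>x. norm (T x) \<le> norm x * K" using bcl_bound[OF T] by blast
  show ?thesis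
  proof (rule bclI[where K=K])
    show "A (x + y) = A x + A y" for x y
      by (rule cinner_ext) (metis A cinner_add_right)
    show "A (scaleC c x) = scaleC c (A x)" for c x
      by (rule cinner_ext) (metis A cinner_scaleC_right)
    show "norm (A y) \<le> norm y * K" for y
    proof (cases "A y = 0")
      case True then show ?thesis using K by simp
    next
      case False
      have "(norm (A y))^2 = Re (cinner (T (A y)) y)" by (simp add: A norm_sq_cinner)
      also have "\<dots> \<le> cmod (cinner (T (A y)) y)" by (rule complex_Re_le_cmod)
      also have "\<dots> \<le> norm (T (A y)) * norm y" by (rule cauchy_schwarz)
      also have "\<dots> \<le> norm (A y) * K * norm y" using K by (simp add: mult_right_mono)
      finally have "norm (A y) * norm (A y) \<le> norm (A y) * (norm y * K)"
        by (simp add: power2_eq_square algebra_simps)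
      then show ?thesis using False by simp
    qed
  qed
qed



lemma cinner_bl: "bounded_linear (\<lambda>z. cinner y (z::'a::complex_inner))"
proof (rule bounded_linear_intro[where K="norm y"])
  show "cinner y (a + b) = cinner y a + cinner y b" for a b by (rule cinner_add_right)
  show "cinner y (scaleR r a) = scaleR r (cinner y a)" for r a
    by (simp add: scaleR_scaleC cinner_scaleC_right scaleR_conv_of_real)
  show "norm (cinner y a) \<le> norm a * norm y" for a using cauchy_schwarz[of y a] by (simp add: mult.commute)
qed

lemma proj_lemma:
  fixes F G :: "'a::chilbert \<Rightarrow> 'a" and K :: real
  assumes F: "bounded_clinear F" and G: "bounded_clinear G"
    and adj: "\<forall>x y. cinner (F x) y = cinner x (G y)"
    and idem: "\<forall>x. F (F x) = F x"
    and KF: "\<forall>x. norm (F x) \<le> norm x * K" and KG: "\<forall>x. norm (G x) \<le> norm x * K" and K1: "K \<ge> 1"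
  defines "B \<equiv> (\<lambda>x. x - scaleC (complex_of_real (1 / K^2)) (G (F x)))"
  shows "\<exists>P. bounded_clinear P \<and> is_orth_proj P (ker F) \<and>
            (\<forall>e>0. \<exists>n. \<forall>x. norm (P x - (B ^^ n) x) \<le> e * norm x)"
proof -
  define M where "M = K^2"
  have M1: "M \<ge> 1" unfolding M_def using K1 by (simp add: one_le_power)
  define c where "c = complex_of_real (1 / M)"
  define Q where "Q x = G (F x)" for x
  have Bdef: "B x = x - scaleC c (Q x)" for x unfolding B_def c_def Q_def M_def by simp
  define orth where "orth x \<longleftrightarrow> (\<forall>y. F y = 0 \<longrightarrow> cinner y x = 0)" for x
  have bclQ: "bounded_clinear Q" unfolding Q_def using bcl_comp[OF G F] by (simp add: comp_def)
  have bclB: "bounded_clinear B"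
  proof -
    have "bounded_clinear (\<lambda>x. x - scaleC c (Q x))" by (intro bcl_minus_fun bcl_id bcl_smult bclQ)
    moreover have "B = (\<lambda>x. x - scaleC c (Q x))" by (rule ext) (rule Bdef)
    ultimately show ?thesis by simp
  qed
  have bclBn: "bounded_clinear (B ^^ n)" for n by (rule bcl_funpow[OF bclB])
  have orthQ: "orth (Q x)" for x unfolding orth_def Q_def
  proof (intro allI impI)
    fix y assume "F y = 0"
    then show "cinner y (G (F x)) = 0" using adj[rule_format, of y "F x"] by simp
  qed
  have orth_scale: "orth x \<Longrightarrow> orth (scaleC a x)" for a x unfolding orth_def by (simp add: cinner_scaleC_right)
  have orthB: "orth x \<Longrightarrow> orth (B x)" for x
    using orthQ[of x] unfolding orth_def Bdef by (simp add: cinner_diff_right cinner_scaleC_right)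
  have orthBn: "orth x \<Longrightarrow> orth ((B ^^ n) x)" for n x by (induction n) (auto intro: orthB)
  have lowF: "orth x \<Longrightarrow> (norm x)^2 \<le> (norm (F x))^2" for x
  proof -
    assume ox: "orth x"
    define u where "u = x - F x"
    have Fu: "F u = 0" unfolding u_def using idem bcl_diff[OF F] by simp
    then have "cinner u x = 0" using ox unfolding orth_def by blast
    then have "cinner x u = 0" by (metis cinner_commute complex_cnj_zero)
    then have "(norm (F x))^2 = (norm x)^2 + (norm u)^2"
      using norm_diff_sq[of x u] unfolding u_def by simp
    then show ?thesis by simp
  qed
  have QF: "Re (cinner x (Q x)) = (norm (F x))^2" for x
    unfolding Q_def using adj[rule_format, of x "F x"] by (simp add: norm_sq_cinner)
  have Qb: "norm (Q x) \<le> K * norm (F x)" for x unfolding Q_def using KG by (simp add: mult.commute)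
  have Qb2: "norm (Q x) \<le> M * norm x" for x
  proof -
    have "K * norm (F x) \<le> K * (norm x * K)" using KF K1 by (simp add: mult_left_mono)
    then have "norm (Q x) \<le> K * (norm x * K)" using Qb[of x] by linarith
    then show ?thesis unfolding M_def by (simp add: power2_eq_square algebra_simps)
  qed
  define r where "r = 1 - 1 / M"
  have r0: "0 \<le> r" "r < 1" unfolding r_def using M1 by (auto simp: field_simps)
  have Bcontr: "orth x \<Longrightarrow> (norm (B x))^2 \<le> r * (norm x)^2" for x
  proof -
    assume ox: "orth x"
    define a where "a = (norm (F x))^2"
    have q2: "(norm (Q x))^2 \<le> M * a"
    proof -
      have "(norm (Q x))^2 \<le> (K * norm (F x))^2" using Qb[of x] by (simp add: power_mono)
      then show ?thesis unfolding a_def M_def by (simp add: power_mult_distrib)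
    qed
    have "(norm (B x))^2 = (norm x)^2 - 2 * Re (cinner x (scaleC c (Q x))) + (norm (scaleC c (Q x)))^2"
      unfolding Bdef by (rule norm_diff_sq)
    also have "Re (cinner x (scaleC c (Q x))) = a / M"
      unfolding c_def a_def using QF[of x] by (simp add: cinner_scaleC_right)
    also have "(norm (scaleC c (Q x)))^2 = (norm (Q x))^2 / M^2"
      unfolding c_def using M1 by (simp add: norm_scaleC norm_divide power_mult_distrib power_divide)
    also have "(norm (Q x))^2 / M^2 \<le> M * a / M^2" using q2 M1 by (simp add: divide_right_mono)
    also have "M * a / M^2 = a / M" using M1 by (simp add: power2_eq_square)
    finally have "(norm (B x))^2 \<le> (norm x)^2 - a / M" by simp
    also have "\<dots> \<le> (norm x)^2 - (norm x)^2 / M"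
      using lowF[OF ox] M1 unfolding a_def by (simp add: divide_right_mono)
    also have "\<dots> = r * (norm x)^2" unfolding r_def by (simp add: algebra_simps)
    finally show ?thesis .
  qed
  define s where "s = sqrt r"
  have s0: "0 \<le> s" "s < 1" unfolding s_def using r0 by auto
  have Bncontr: "orth x \<Longrightarrow> norm ((B ^^ n) x) \<le> s^n * norm x" for n x
  proof -
    assume ox: "orth x"
    have "(norm ((B ^^ n) x))^2 \<le> r^n * (norm x)^2"
    proof (induction n)
      case 0 then show ?case by simp
    next
      case (Suc n)
      have "(norm ((B ^^ Suc n) x))^2 = (norm (B ((B ^^ n) x)))^2" by simp
      also have "\<dots> \<le> r * (norm ((B ^^ n) x))^2" by (rule Bcontr[OF orthBn[OF ox]])
      also have "\<dots> \<le> r * (r^n * (norm x)^2)" using Suc r0 by (simp add: mult_left_mono)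
      finally show ?case by (simp add: mult.assoc)
    qed
    also have "r^n * (norm x)^2 = (s^n * norm x)^2"
    proof -
      have "(sqrt r ^ n)^2 = (sqrt r ^ 2)^n" by (metis power_mult mult.commute)
      also have "\<dots> = r^n" using r0 by simp
      finally show ?thesis unfolding s_def by (simp add: power_mult_distrib)
    qed
    finally show ?thesis by (rule power2_le_imp_le) (use s0 in simp)
  qed
  have Dstep: "norm ((B ^^ n) x - (B ^^ Suc n) x) \<le> s^n * norm x" for n x
  proof -
    have "(B ^^ Suc n) x = (B ^^ n) (B x)" by (simp add: funpow_Suc_right del: funpow.simps)
    then have "(B ^^ n) x - (B ^^ Suc n) x = (B ^^ n) (scaleC c (Q x))"
      using bcl_diff[OF bclBn[of n]] unfolding Bdef by simp
    then have "norm ((B ^^ n) x - (B ^^ Suc n) x) \<le> s^n * norm (scaleC c (Q x))"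
      using Bncontr[OF orth_scale[OF orthQ]] by simp
    also have "norm (scaleC c (Q x)) \<le> norm x"
    proof -
      have "norm (scaleC c (Q x)) = norm (Q x) / M" unfolding c_def using M1 by (simp add: norm_scaleC norm_divide)
      also have "\<dots> \<le> norm x" using Qb2[of x] M1 by (simp add: divide_le_eq mult.commute)
      finally show ?thesis .
    qed
    then have "s^n * norm (scaleC c (Q x)) \<le> s^n * norm x" using s0 by (simp add: mult_left_mono)
    finally show ?thesis .
  qed
  have Dsum: "norm ((B ^^ n) x - (B ^^ (n + p)) x) \<le> (s^n - s^(n+p)) / (1 - s) * norm x" for n p x
  proof (induction p)
    case 0 then show ?case by simp
  next
    case (Suc p)
    have "norm ((B ^^ n) x - (B ^^ (n + Suc p)) x)
        \<le> norm ((B ^^ n) x - (B ^^ (n + p)) x) + norm ((B ^^ (n+p)) x - (B ^^ Suc (n + p)) x)"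
    proof -
      have "(B ^^ n) x - (B ^^ (n + Suc p)) x = ((B ^^ n) x - (B ^^ (n + p)) x) + ((B ^^ (n+p)) x - (B ^^ Suc (n + p)) x)"
        by simp
      then show ?thesis by (metis norm_triangle_ineq)
    qed
    also have "\<dots> \<le> (s^n - s^(n+p)) / (1 - s) * norm x + s^(n+p) * norm x"
      using Suc Dstep[of "n+p" x] by simp
    also have "\<dots> = (s^n - s^(n + Suc p)) / (1 - s) * norm x"
      using s0 by (simp add: field_simps)
    finally show ?case .
  qed
  have Dsum2: "norm ((B ^^ n) x - (B ^^ (n + p)) x) \<le> s^n / (1 - s) * norm x" for n p x
  proof -
    have "(s^n - s^(n+p)) / (1 - s) * norm x \<le> s^n / (1 - s) * norm x"
      using s0 by (intro mult_right_mono divide_right_mono) auto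
    then show ?thesis using Dsum[of n x p] by linarith
  qed
  have spow: "(\<lambda>n. s^n / (1 - s)) \<longlonglongrightarrow> 0"
    using LIMSEQ_power_zero[of s] s0 tendsto_divide_zero by fastforce
  have small: "\<exists>N. \<forall>n\<ge>N. s^n / (1 - s) < e" if e0: "e > 0" for e
  proof -
    obtain N where "\<forall>n\<ge>N. norm (s^n / (1 - s) - 0) < e" using LIMSEQ_D[OF spow e0] by blast
    then show ?thesis by (metis abs_less_iff diff_zero real_norm_def)
  qed
  have cauchy: "Cauchy (\<lambda>n. (B ^^ n) x)" for x
  proof (rule metric_CauchyI)
    fix e :: real assume e: "e > 0"
    obtain N where N: "\<forall>n\<ge>N. s^n / (1 - s) < e / (norm x + 1)"
    proof -
      have "norm x + 1 > 0" using norm_ge_zero[of x] by linarith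
      then have "0 < e / (norm x + 1)" using e by (rule divide_pos_pos[rotated])
      then show ?thesis using small that by blast
    qed
    have "dist ((B ^^ m) x) ((B ^^ n) x) < e" if mn: "m \<ge> N" "n \<ge> N" for m n
    proof -
      have key: "norm ((B ^^ a) x - (B ^^ (a + p)) x) < e" if "a \<ge> N" for a p
      proof -
        have "norm ((B ^^ a) x - (B ^^ (a + p)) x) \<le> s^a / (1 - s) * norm x" by (rule Dsum2)
        also have "\<dots> \<le> e / (norm x + 1) * norm x"
          using N that by (intro mult_right_mono) auto
        also have "\<dots> < e"
        proof -
          have h: "norm x + 1 > 0" using norm_ge_zero[of x] by linarith
          have "e * norm x < e * (norm x + 1)" using e by simp
          then have "e * norm x / (norm x + 1) < e" using h by (simp add: divide_less_eq)
          then show ?thesis by simp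
        qed
        finally show ?thesis .
      qed
      show ?thesis
      proof (cases "m \<le> n")
        case True
        then obtain p where "n = m + p" using le_Suc_ex by blast
        then show ?thesis using key[OF mn(1), of p] by (simp add: dist_norm)
      next
        case False
        then obtain p where "m = n + p" by (metis le_Suc_ex nle_le)
        then show ?thesis using key[OF mn(2), of p] by (simp add: dist_norm norm_minus_commute)
      qed
    qed
    then show "\<exists>M. \<forall>m\<ge>M. \<forall>n\<ge>M. dist ((B ^^ m) x) ((B ^^ n) x) < e" by blast
  qed
  define P where "P x = lim (\<lambda>n. (B ^^ n) x)" for x
  have Plim: "(\<lambda>n. (B ^^ n) x) \<longlonglongrightarrow> P x" for x
    unfolding P_def using cauchy[of x] Cauchy_convergent convergent_LIMSEQ_iff by blast
  have Papprox: "norm (P x - (B ^^ n) x) \<le> s^n / (1 - s) * norm x" for n x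
  proof -
    have "(\<lambda>p. norm ((B ^^ n) x - (B ^^ (p + n)) x)) \<longlonglongrightarrow> norm ((B ^^ n) x - P x)"
      by (intro tendsto_intros LIMSEQ_ignore_initial_segment Plim)
    then have "norm ((B ^^ n) x - P x) \<le> s^n / (1 - s) * norm x"
      apply (rule LIMSEQ_le_const2) using Dsum2[of n x] by (simp add: add.commute)
    then show ?thesis by (simp add: norm_minus_commute)
  qed
  have bclP: "bounded_clinear P"
  proof (rule bclI[where K="1 / (1 - s) + 1"])
    show "P (x + y) = P x + P y" for x y
    proof -
      have "(\<lambda>n. (B ^^ n) (x + y)) \<longlonglongrightarrow> P x + P y"
        using tendsto_add[OF Plim[of x] Plim[of y]] by (simp add: bcl_add[OF bclBn])
      then show ?thesis using Plim[of "x+y"] LIMSEQ_unique by blast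
    qed
    show "P (scaleC a x) = scaleC a (P x)" for a x
    proof -
      have bl: "bounded_linear (\<lambda>z::'a. scaleC a z)" by (rule bcl_linear[OF bcl_smult[OF bcl_id]])
      have "(\<lambda>n. (B ^^ n) (scaleC a x)) \<longlonglongrightarrow> scaleC a (P x)"
        using bounded_linear.tendsto[OF bl Plim[of x]] by (simp add: bcl_scaleC[OF bclBn])
      then show ?thesis using Plim[of "scaleC a x"] LIMSEQ_unique by blast
    qed
    show "norm (P x) \<le> norm x * (1 / (1 - s) + 1)" for x
    proof -
      have "norm (P x) \<le> norm (P x - (B ^^ 0) x) + norm x"
        using norm_triangle_sub[of "P x" x] by (simp add: add.commute)
      also have "\<dots> \<le> 1 / (1 - s) * norm x + norm x" using Papprox[of x 0] by simp
      finally show ?thesis by (simp add: algebra_simps)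
    qed
  qed
  have PinK: "F (P x) = 0" for x
  proof -
    have "(\<lambda>n. (B ^^ Suc n) x) \<longlonglongrightarrow> B (P x)"
      using bounded_linear.tendsto[OF bcl_linear[OF bclB] Plim[of x]] by simp
    moreover have "(\<lambda>n. (B ^^ Suc n) x) \<longlonglongrightarrow> P x" using Plim[of x] by (rule LIMSEQ_Suc)
    ultimately have "B (P x) = P x" using LIMSEQ_unique by blast
    then have "scaleC c (Q (P x)) = 0" unfolding Bdef by simp
    then have "scaleC (1/c) (scaleC c (Q (P x))) = 0" by simp
    then have "Q (P x) = 0" unfolding c_def using M1 by (simp add: scaleC_scaleC)
    then have "(norm (F (P x)))^2 = 0" using QF[of "P x"] by simp
    then show ?thesis by simp
  qed
  have Porth: "cinner y (x - P x) = 0" if Fy: "F y = 0" for x y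
  proof -
    have QB: "cinner y (B z) = cinner y z" for z
    proof -
      have "cinner y (Q z) = 0" unfolding Q_def using adj[rule_format, of y "F z"] Fy by simp
      then show ?thesis unfolding Bdef by (simp add: cinner_diff_right cinner_scaleC_right)
    qed
    have cst: "cinner y ((B ^^ n) x) = cinner y x" for n by (induction n) (simp_all add: QB)
    have t1: "(\<lambda>n. cinner y ((B ^^ n) x)) \<longlonglongrightarrow> cinner y (P x)"
      by (rule bounded_linear.tendsto[OF cinner_bl Plim])
    have t2: "(\<lambda>n. cinner y ((B ^^ n) x)) \<longlonglongrightarrow> cinner y x" by (simp only: cst) (rule tendsto_const)
    have "cinner y (P x) = cinner y x" by (rule LIMSEQ_unique[OF t1 t2])
    then show ?thesis by (simp add: cinner_diff_right)
  qed
  have "is_orth_proj P (ker F)" unfolding is_orth_proj_def ker_def using PinK Porth by simp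
  moreover have "\<forall>e>0. \<exists>n. \<forall>x. norm (P x - (B ^^ n) x) \<le> e * norm x"
  proof (intro allI impI)
    fix e :: real assume "e > 0"
    then obtain N where "\<forall>n\<ge>N. s^n / (1 - s) < e" using small by blast
    then have "s^N / (1 - s) \<le> e" by auto
    then show "\<exists>n. \<forall>x. norm (P x - (B ^^ n) x) \<le> e * norm x"
    proof (intro exI[of _ N] allI)
      fix x :: 'a
      have "s^N / (1 - s) * norm x \<le> e * norm x" using \<open>s^N / (1 - s) \<le> e\<close> by (rule mult_right_mono) simp
      then show "norm (P x - (B ^^ N) x) \<le> e * norm x" using Papprox[of x N] by linarith
    qed
  qed
  ultimately show ?thesis using bclP by blast
qed



definition peval :: "complex poly \<Rightarrow> ('a::complex_inner \<Rightarrow> 'a) \<Rightarrow> 'a \<Rightarrow> 'a" where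
  "peval p T = foldr (\<lambda>a f. (\<lambda>x. scaleC a x + T (f x))) (coeffs p) (\<lambda>x. 0)"

lemma peval_0[simp]: "peval 0 T = (\<lambda>x. 0)"
  by (simp add: peval_def)

lemma peval_pCons:
  assumes T: "bounded_clinear T"
  shows "peval (pCons a p) T = (\<lambda>x. scaleC a x + T (peval p T x))"
proof (cases "a = 0 \<and> p = 0")
  case True then show ?thesis using T by (simp add: peval_def)
next
  case False
  then have "coeffs (pCons a p) = a # coeffs p" by (auto simp: coeffs_pCons_eq_cCons cCons_def)
  then show ?thesis by (simp add: peval_def)
qed

lemma peval_add:
  assumes T: "bounded_clinear T"
  shows "peval (p + q) T = (\<lambda>x. peval p T x + peval q T x)"
proof (induction p arbitrary: q rule: pCons_induct)
  case 0 then show ?case by simp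
next
  case (pCons a p)
  obtain b q' where q: "q = pCons b q'" by (rule pCons_cases)
  show ?case unfolding q add_pCons peval_pCons[OF T] pCons.IH
    by (rule ext) (simp add: bcl_add[OF T] scaleC_add_left algebra_simps)
qed

lemma peval_smult:
  assumes T: "bounded_clinear T"
  shows "peval (smult c p) T = (\<lambda>x. scaleC c (peval p T x))"
proof (induction p rule: pCons_induct)
  case 0 then show ?case by simp
next
  case (pCons a p)
  show ?case unfolding smult_pCons peval_pCons[OF T] pCons.IH
    by (rule ext) (simp add: bcl_scaleC[OF T] scaleC_add_right scaleC_scaleC)
qed

lemma peval_mult:
  assumes T: "bounded_clinear T"
  shows "peval (p * q) T = peval p T \<circ> peval q T"
proof (induction p rule: pCons_induct)
  case 0 then show ?case by (simp add: comp_def)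
next
  case (pCons a p)
  show ?case unfolding mult_pCons_left peval_add[OF T] peval_smult[OF T] peval_pCons[OF T] pCons.IH
    by (rule ext) simp
qed

lemma peval_1: "bounded_clinear T \<Longrightarrow> peval 1 T = (\<lambda>x. x)"
  using peval_pCons[of T 1 0] by (simp add: one_pCons)

lemma peval_X: "bounded_clinear T \<Longrightarrow> peval [:0, 1:] T = T"
  using peval_pCons[of T 0 "[:1:]"] peval_pCons[of T 1 0] by (simp add: fun_eq_iff)

lemma peval_lin: "bounded_clinear T \<Longrightarrow> peval [:-c, 1:] T = (\<lambda>x. T x - scaleC c x)"
  using peval_pCons[of T "-c" "[:1:]"] peval_pCons[of T 1 0]
  by (simp add: fun_eq_iff scaleC_minus_left)

lemma peval_power: "bounded_clinear T \<Longrightarrow> peval (p ^ n) T = peval p T ^^ n"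
  by (induction n) (simp_all add: peval_1 peval_mult id_def)

lemma peval_bcl: "bounded_clinear T \<Longrightarrow> bounded_clinear (peval p T)"
proof (induction p rule: pCons_induct)
  case 0 then show ?case by (simp add: bcl_const0)
next
  case (pCons a p)
  have "bounded_clinear (\<lambda>x. scaleC a x + T (peval p T x))"
    using bcl_plus[OF bcl_smult[OF bcl_id] bcl_comp[OF pCons.prems pCons.IH[OF pCons.prems]]]
    by (simp add: comp_def)
  then show ?case by (simp add: peval_pCons[OF pCons.prems])
qed

lemma peval_comm: "bounded_clinear T \<Longrightarrow> peval p T (T x) = T (peval p T x)"
proof -
  assume T: "bounded_clinear T"
  have e1: "peval (p * [:0,1:]) T = peval p T \<circ> T" by (simp only: peval_mult[OF T] peval_X[OF T])
  have e2: "peval ([:0,1:] * p) T = T \<circ> peval p T" by (simp only: peval_mult[OF T] peval_X[OF T])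
  have "p * [:0,1:] = [:0,1:] * p" by (rule mult.commute)
  then have "peval p T \<circ> T = T \<circ> peval p T" using e1 e2 by simp
  then show ?thesis by (metis comp_apply)
qed

lemma peval_adj:
  assumes T: "bounded_clinear T" and A: "bounded_clinear A"
    and adj: "\<forall>x y. cinner (T x) y = cinner x (A y)"
  shows "cinner (peval p T x) y = cinner x (peval (map_poly cnj p) A y)"
proof (induction p arbitrary: x y rule: pCons_induct)
  case 0 then show ?case by simp
next
  case (pCons a p)
  have "cinner (peval (pCons a p) T x) y = cnj a * cinner x y + cinner (peval p T x) (A y)"
    by (simp add: peval_pCons[OF T] cinner_add_left cinner_scaleC_left adj)
  also have "\<dots> = cnj a * cinner x y + cinner x (peval (map_poly cnj p) A (A y))"
    by (simp add: pCons.IH)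
  also have "\<dots> = cinner x (peval (map_poly cnj (pCons a p)) A y)"
    by (simp add: map_poly_pCons peval_pCons[OF A] cinner_add_right cinner_scaleC_right peval_comm[OF A])
  finally show ?case .
qed

lemma peval_star:
  assumes T: "bounded_clinear T" and mem: "T \<in> star_poly_alg T0"
  shows "peval p T \<in> star_poly_alg T0"
proof (induction p rule: pCons_induct)
  case 0
  have "(\<lambda>x. scaleC 0 ((\<lambda>x. x) x)) \<in> star_poly_alg T0" by (intro star_poly_alg.smult star_poly_alg.unit)
  then show ?case by simp
next
  case (pCons a p)
  have "(\<lambda>x. (\<lambda>x. scaleC a ((\<lambda>x. x) x)) x + (T \<circ> peval p T) x) \<in> star_poly_alg T0"
    by (intro star_poly_alg.add star_poly_alg.smult star_poly_alg.unit star_poly_alg.comp mem pCons.IH)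
  then show ?case by (simp add: peval_pCons[OF T])
qed

lemma opprod_peval:
  assumes T: "bounded_clinear T"
  shows "opprod T t k m = peval (\<Prod>i\<in>{1..m}. [:-t i, 1:] ^ k i) T"
proof (induction m)
  case 0 then show ?case by (simp add: peval_1[OF T])
next
  case (Suc m)
  have eq: "(\<Prod>i\<in>{1..Suc m}. [:-t i, 1:] ^ k i) = [:-t (Suc m), 1:] ^ k (Suc m) * (\<Prod>i\<in>{1..m}. [:-t i, 1:] ^ k i)"
    by (simp add: prod.cl_ivl_Suc mult.commute)
  show ?case unfolding eq peval_mult[OF T] peval_power[OF T] peval_lin[OF T] Suc.IH[symmetric]
    by simp
qed



definition cop :: "complex poly \<Rightarrow> complex poly \<Rightarrow> bool" where
  "cop p q \<longleftrightarrow> (\<exists>a b. a * p + b * q = 1)"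

lemma cop_sym: "cop p q \<Longrightarrow> cop q p"
  unfolding cop_def by (metis add.commute)

lemma cop_one: "cop p 1"
  unfolding cop_def by (rule exI[of _ 0], rule exI[of _ 1]) simp

lemma cop_mult: "cop p q \<Longrightarrow> cop p r \<Longrightarrow> cop p (q * r)"
proof -
  assume "cop p q" "cop p r"
  then obtain a b c d where h1: "a * p + b * q = 1" and h2: "c * p + d * r = 1" unfolding cop_def by blast
  have "(a*c*p + a*d*r + b*q*c) * p + (b*d) * (q*r) = (a * p + b * q) * (c * p + d * r)"
    by (simp add: algebra_simps)
  also have "\<dots> = 1" using h1 h2 by simp
  finally show ?thesis unfolding cop_def by blast
qed

lemma cop_power: "cop p q \<Longrightarrow> cop p (q ^ n)"
  by (induction n) (simp_all add: cop_one cop_mult)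

lemma cop_prod: "finite S \<Longrightarrow> (\<And>i. i \<in> S \<Longrightarrow> cop p (f i)) \<Longrightarrow> cop p (\<Prod>i\<in>S. f i)"
  by (induction S rule: finite_induct) (simp_all add: cop_one cop_mult)

lemma cop_lin: "s \<noteq> t \<Longrightarrow> cop [:-s, 1:] [:-t, 1:]"
proof -
  assume st: "s \<noteq> t"
  define c where "c = 1 / (t - s)"
  have "[:c:] * [:-s, 1:] + [:-c:] * [:-t, 1:] = [:c * (t - s):]" by (simp add: algebra_simps)
  also have "\<dots> = 1" using st unfolding c_def by (simp add: one_pCons)
  finally show ?thesis unfolding cop_def by blast
qed

lemma idem_exists:
  assumes T: "bounded_clinear T" and cpq: "cop p q" and z: "peval (p * q) T = (\<lambda>x. 0)"
  shows "\<exists>f. (\<forall>x. peval f T (peval f T x) = peval f T x) \<and> ker (peval f T) = ker (peval p T)"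
proof -
  obtain a b where h: "a * p + b * q = 1" using cpq unfolding cop_def by blast
  define f where "f = a * p"
  have ff: "f * f = f + smult (-1) ((a * b) * (p * q))"
  proof -
    have "f * f = f * (a * p + b * q) - (a * b) * (p * q)" unfolding f_def by (simp add: algebra_simps)
    then show ?thesis using h by simp
  qed
  have pq0: "peval p T (peval q T x) = 0" for x using fun_cong[OF z, of x] by (simp add: peval_mult[OF T])
  have idem: "peval f T (peval f T x) = peval f T x" for x
  proof -
    have "peval f T (peval f T x) = peval (f * f) T x" by (simp add: peval_mult[OF T])
    also have "\<dots> = peval f T x" unfolding ff peval_add[OF T] peval_smult[OF T] peval_mult[OF T]
      by (simp add: pq0 bcl_zero[OF peval_bcl[OF T]])
    finally show ?thesis .
  qed
  have pp: "p = p * f + b * (p * q)"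
  proof -
    have "p = p * (a * p + b * q)" using h by simp
    then show ?thesis unfolding f_def by (simp add: algebra_simps)
  qed
  have "ker (peval f T) = ker (peval p T)"
  proof
    show "ker (peval f T) \<subseteq> ker (peval p T)"
    proof
      fix x assume "x \<in> ker (peval f T)"
      then have fx: "peval f T x = 0" unfolding ker_def by simp
      have "peval p T x = peval (p * f + b * (p * q)) T x" using pp by simp
      also have "\<dots> = 0"
        by (simp add: peval_add[OF T] peval_mult[OF T] fx pq0 bcl_zero[OF peval_bcl[OF T]])
      finally show "x \<in> ker (peval p T)" unfolding ker_def by simp
    qed
    show "ker (peval p T) \<subseteq> ker (peval f T)"
    proof
      fix x assume "x \<in> ker (peval p T)"
      then have "peval p T x = 0" unfolding ker_def by simp
      then have "peval f T x = 0" unfolding f_def by (simp add: peval_mult[OF T] bcl_zero[OF peval_bcl[OF T]])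
      then show "x \<in> ker (peval f T)" unfolding ker_def by simp
    qed
  qed
  then show ?thesis using idem by blast
qed



lemma star_funpow: "B \<in> star_poly_alg T \<Longrightarrow> B ^^ n \<in> star_poly_alg T"
proof (induction n)
  case 0 then show ?case using star_poly_alg.unit by (simp add: id_def)
next
  case (Suc n) then show ?case by (simp add: star_poly_alg.comp del: funpow.simps) (metis funpow.simps(2) star_poly_alg.comp)
qed

lemma proj_m:
  fixes T :: "'a::chilbert \<Rightarrow> 'a"
  assumes T: "bounded_clinear T" and inj: "inj_on t {1..N}"
    and z: "opprod T t k N = (\<lambda>x. 0)" and mN: "m \<le> N"
  shows "\<exists>P. bounded_clinear P \<and> is_orth_proj P (ker (opprod T t k m)) \<and>
    (\<forall>e>0. \<exists>C\<in>star_poly_alg T. bounded_clinear C \<and> (\<forall>x. norm (P x - C x) \<le> e * norm x))"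
proof -
  define l where "l i = [:-t i, 1:] ^ k i" for i
  define p where "p = (\<Prod>i\<in>{1..m}. l i)"
  define q where "q = (\<Prod>i\<in>{Suc m..N}. l i)"
  have "{1..N} = {1..m} \<union> {Suc m..N}" using mN by auto
  then have pq: "p * q = (\<Prod>i\<in>{1..N}. l i)" unfolding p_def q_def
    by (simp add: prod.union_disjoint[symmetric] ivl_disj_int)
  have z': "peval (p * q) T = (\<lambda>x. 0)" using z unfolding pq l_def opprod_peval[OF T] .
  have "cop p q"
  proof -
    have "cop q (l i)" if i: "i \<in> {1..m}" for i
    proof -
      have "cop (l i) (l j)" if j: "j \<in> {Suc m..N}" for j
      proof -
        have "t i \<noteq> t j" using inj i j mN by (auto dest: inj_onD)
        then have "cop [:-t i, 1:] [:-t j, 1:]" by (rule cop_lin)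
        then have "cop [:-t i, 1:] ([:-t j, 1:] ^ k j)" by (rule cop_power)
        then have "cop ([:-t j, 1:] ^ k j) [:-t i, 1:]" by (rule cop_sym)
        then have "cop ([:-t j, 1:] ^ k j) ([:-t i, 1:] ^ k i)" by (rule cop_power)
        then show ?thesis unfolding l_def by (rule cop_sym)
      qed
      then have "cop (l i) q" unfolding q_def by (intro cop_prod) auto
      then show ?thesis by (rule cop_sym)
    qed
    then have "cop q p" unfolding p_def by (intro cop_prod) auto
    then show ?thesis by (rule cop_sym)
  qed
  then obtain f where idem: "\<forall>x. peval f T (peval f T x) = peval f T x"
    and kerf: "ker (peval f T) = ker (peval p T)"
    using idem_exists[OF T _ z'] by blast
  have kerm: "ker (peval f T) = ker (opprod T t k m)"
    using kerf unfolding p_def l_def opprod_peval[OF T] .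
  define A where "A = cadjoint T"
  have adjA: "\<forall>x y. cinner (T x) y = cinner x (A y)" unfolding A_def by (rule adjoint_exists[OF T])
  have bclA: "bounded_clinear A" by (rule adjoint_bcl[OF T adjA])
  define F where "F = peval f T"
  define G where "G = peval (map_poly cnj f) A"
  have bclF: "bounded_clinear F" unfolding F_def by (rule peval_bcl[OF T])
  have bclG: "bounded_clinear G" unfolding G_def by (rule peval_bcl[OF bclA])
  have adjFG: "\<forall>x y. cinner (F x) y = cinner x (G y)"
    unfolding F_def G_def using peval_adj[OF T bclA adjA] by blast
  have Tst: "T \<in> star_poly_alg T" by (rule star_poly_alg.gen)
  have Ast: "A \<in> star_poly_alg T" unfolding A_def by (rule star_poly_alg.adj[OF Tst])
  have Fst: "F \<in> star_poly_alg T" unfolding F_def by (rule peval_star[OF T Tst])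
  have Gst: "G \<in> star_poly_alg T" unfolding G_def by (rule peval_star[OF bclA Ast])
  obtain KF where KF: "KF > 0" "\<forall>x. norm (F x) \<le> norm x * KF" using bcl_bound[OF bclF] by blast
  obtain KG where KG: "KG > 0" "\<forall>x. norm (G x) \<le> norm x * KG" using bcl_bound[OF bclG] by blast
  define K where "K = max (max KF KG) 1"
  have K1: "K \<ge> 1" unfolding K_def by simp
  have KF': "\<forall>x. norm (F x) \<le> norm x * K"
  proof
    fix x :: 'a
    have "norm x * KF \<le> norm x * K" unfolding K_def by (intro mult_left_mono) auto
    then show "norm (F x) \<le> norm x * K" using KF by (meson order_trans)
  qed
  have KG': "\<forall>x. norm (G x) \<le> norm x * K"
  proof
    fix x :: 'a
    have "norm x * KG \<le> norm x * K" unfolding K_def by (intro mult_left_mono) auto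
    then show "norm (G x) \<le> norm x * K" using KG by (meson order_trans)
  qed
  define B where "B = (\<lambda>x. x - scaleC (complex_of_real (1 / K^2)) (G (F x)))"
  have idemF: "\<forall>x. F (F x) = F x" unfolding F_def using idem .
  obtain P where P: "bounded_clinear P" "is_orth_proj P (ker F)"
    "\<forall>e>0. \<exists>n. \<forall>x. norm (P x - (B ^^ n) x) \<le> e * norm x"
    using proj_lemma[OF bclF bclG adjFG idemF KF' KG' K1] unfolding B_def by blast
  have Bst: "B \<in> star_poly_alg T"
  proof -
    have "(\<lambda>x. (\<lambda>x. x) x + (\<lambda>x. scaleC (- complex_of_real (1 / K^2)) ((G \<circ> F) x)) x) \<in> star_poly_alg T"
      by (intro star_poly_alg.add star_poly_alg.unit star_poly_alg.smult star_poly_alg.comp Gst Fst)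
    moreover have "(\<lambda>x. (\<lambda>x. x) x + (\<lambda>x. scaleC (- complex_of_real (1 / K^2)) ((G \<circ> F) x)) x) = B"
      unfolding B_def by (rule ext) (simp add: scaleC_minus_left)
    ultimately show ?thesis by simp
  qed
  have bclB: "bounded_clinear B"
  proof -
    have "bounded_clinear (\<lambda>x. x - scaleC (complex_of_real (1 / K^2)) ((G \<circ> F) x))"
      by (intro bcl_minus_fun bcl_id bcl_smult bcl_comp bclG bclF)
    then show ?thesis unfolding B_def by simp
  qed
  have "\<forall>e>0. \<exists>C\<in>star_poly_alg T. bounded_clinear C \<and> (\<forall>x. norm (P x - C x) \<le> e * norm x)"
  proof (intro allI impI)
    fix e :: real assume "e > 0"
    then obtain n where "\<forall>x. norm (P x - (B ^^ n) x) \<le> e * norm x" using P(3) by blast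
    then show "\<exists>C\<in>star_poly_alg T. bounded_clinear C \<and> (\<forall>x. norm (P x - C x) \<le> e * norm x)"
      using star_funpow[OF Bst, of n] bcl_funpow[OF bclB, of n] by blast
  qed
  then show ?thesis using P(1,2) kerm unfolding F_def by auto
qed



theorem mainTheorem5:
  fixes T :: "'a::chilbert \<Rightarrow> 'a"
    and t :: "nat \<Rightarrow> complex"
    and k :: "nat \<Rightarrow> nat"
    and N :: nat
  assumes "bounded_clinear T"
    and "inj_on t {1..N}"
    and "\<forall>i\<in>{1..N}. k i > 0"
    and "opprod T t k N = (\<lambda>x. 0)"
  shows "\<forall>m\<in>{1..N}. \<exists>P\<in>cstar_gen T.
           is_orth_proj P (orth_in (ker (opprod T t k m)) (ker (opprod T t k (m - 1))))"
proof
  fix m assume m: "m \<in> {1..N}"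
  note T = assms(1)
  define R1 where "R1 = ker (opprod T t k m)"
  define R0 where "R0 = ker (opprod T t k (m - 1))"
  obtain P1 where P1: "bounded_clinear P1" "is_orth_proj P1 R1"
    "\<forall>e>0. \<exists>C\<in>star_poly_alg T. bounded_clinear C \<and> (\<forall>x. norm (P1 x - C x) \<le> e * norm x)"
    using proj_m[OF T assms(2) assms(4), of m] m unfolding R1_def by auto
  obtain P0 where P0: "bounded_clinear P0" "is_orth_proj P0 R0"
    "\<forall>e>0. \<exists>C\<in>star_poly_alg T. bounded_clinear C \<and> (\<forall>x. norm (P0 x - C x) \<le> e * norm x)"
  proof -
    have "m - 1 \<le> N" using m by auto
    then show ?thesis using proj_m[OF T assms(2) assms(4), of "m - 1"] that unfolding R0_def by blast
  qed
  have bclO: "bounded_clinear (opprod T t k m)"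
    unfolding opprod_peval[OF T] by (rule peval_bcl[OF T])
  have sub: "R0 \<subseteq> R1"
  proof
    fix x assume "x \<in> R0"
    then have x0: "opprod T t k (m - 1) x = 0" unfolding R0_def ker_def by simp
    have mm: "m = Suc (m - 1)" using m by auto
    have bS: "bounded_clinear ((\<lambda>x. T x - scaleC (t m) x) ^^ k m)"
      by (intro bcl_funpow bcl_minus_fun T bcl_smult bcl_id)
    have "opprod T t k m x = ((\<lambda>x. T x - scaleC (t m) x) ^^ k m) (opprod T t k (m - 1) x)"
    proof -
      obtain j where j: "m = Suc j" using m by (cases m) auto
      show ?thesis unfolding j by simp
    qed
    then show "x \<in> R1" unfolding R1_def ker_def using x0 bcl_zero[OF bS] by simp
  qed
  have R1diff: "x \<in> R1 \<Longrightarrow> y \<in> R1 \<Longrightarrow> x - y \<in> R1" for x y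
    unfolding R1_def ker_def using bcl_diff[OF bclO] by simp
  define P where "P x = P1 x - P0 x" for x
  have bclP: "bounded_clinear P"
  proof -
    have "bounded_clinear (\<lambda>x. P1 x - P0 x)" by (rule bcl_minus_fun[OF P1(1) P0(1)])
    then show ?thesis unfolding P_def by simp
  qed
  have "P \<in> cstar_gen T" unfolding cstar_gen_def
  proof (intro CollectI conjI bclP allI impI)
    fix e :: real assume e: "e > 0"
    obtain C1 where C1: "C1 \<in> star_poly_alg T" "bounded_clinear C1" "\<forall>x. norm (P1 x - C1 x) \<le> e/4 * norm x"
      using P1(3) e by (meson divide_pos_pos zero_less_numeral)
    obtain C0 where C0: "C0 \<in> star_poly_alg T" "bounded_clinear C0" "\<forall>x. norm (P0 x - C0 x) \<le> e/4 * norm x"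
      using P0(3) e by (meson divide_pos_pos zero_less_numeral)
    define C where "C = (\<lambda>x. C1 x + scaleC (-1) (C0 x))"
    have Cst: "C \<in> star_poly_alg T" unfolding C_def
      by (intro star_poly_alg.add star_poly_alg.smult C1(1) C0(1))
    have "onorm (\<lambda>x. P x - C x) \<le> e/2"
    proof (rule onorm_bound)
      show "0 \<le> e/2" using e by simp
      fix x
      have "P x - C x = (P1 x - C1 x) - (P0 x - C0 x)" unfolding P_def C_def by simp
      then have "norm (P x - C x) \<le> norm (P1 x - C1 x) + norm (P0 x - C0 x)"
        by (metis norm_triangle_ineq4)
      also have "\<dots> \<le> e/4 * norm x + e/4 * norm x" using C1(3) C0(3) by (intro add_mono) auto
      finally show "norm (P x - C x) \<le> e/2 * norm x" by simp
    qed
    then have "onorm (\<lambda>x. P x - C x) < e" using e by simp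
    then show "\<exists>Q\<in>star_poly_alg T. onorm (\<lambda>x. P x - Q x) < e" using Cst by blast
  qed
  moreover have "is_orth_proj P (orth_in R1 R0)"
    unfolding is_orth_proj_def
  proof (intro allI conjI ballI)
    fix x
    have p1: "P1 x \<in> R1" and o1: "\<forall>y\<in>R1. cinner y (x - P1 x) = 0"
      using P1(2) unfolding is_orth_proj_def by auto
    have p0: "P0 x \<in> R0" and o0: "\<forall>y\<in>R0. cinner y (x - P0 x) = 0"
      using P0(2) unfolding is_orth_proj_def by auto
    have in1: "P x \<in> R1" unfolding P_def using R1diff p1 p0 sub by blast
    have c1: "cinner y (P1 x) = cinner y x" if "y \<in> R1" for y
      using o1 that by (simp add: cinner_diff_right)
    have c0: "cinner y (P0 x) = cinner y x" if "y \<in> R0" for y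
      using o0 that by (simp add: cinner_diff_right)
    have "\<forall>y\<in>R0. cinner y (P x) = 0"
      using c1 c0 sub unfolding P_def by (auto simp: cinner_diff_right)
    then show "P x \<in> orth_in R1 R0" unfolding orth_in_def using in1 by simp
    fix y assume y: "y \<in> orth_in R1 R0"
    then have y1: "y \<in> R1" and yo: "\<forall>z\<in>R0. cinner z y = 0" unfolding orth_in_def by auto
    have "cinner (P0 x) y = 0" using yo p0 by blast
    then have "cinner y (P0 x) = 0" by (metis cinner_commute complex_cnj_zero)
    moreover have "cinner y (x - P1 x) = 0" using o1 y1 by blast
    moreover have "x - P x = (x - P1 x) + P0 x" unfolding P_def by simp
    ultimately show "cinner y (x - P x) = 0" by (metis cinner_add_right add_0)
  qed
  ultimately show "\<exists>P\<in>cstar_gen T. is_orth_proj P (orth_in (ker (opprod T t k m)) (ker (opprod T t k (m - 1))))"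
    unfolding R1_def R0_def by blast
qed


end
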